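(* Let $T$ be an MFQST under either the explicit bound or the node-weighted strategy. Let $x$ be any node of $T$, let $u$ be any in-neighbour of $x$ and let $y$ be the out-neighbour of $x$, with $u\ne x\ne y$. Then the angle $\angle uxy$ is at least $90^\circ$.
   Context: Let $Z=\{z_1,\dots,z_n\}\subset\mathbb{R}^2$ ($n\ge 1$) be a set of sources and $z_{BS}\in\mathbb{R}^2\setminus Z$ a sink; each source has supply $1$. A flow-dependent quadratic Steiner tree (FQST) consists of a finite set $S\subset\mathbb{R}^2$ of Steiner points and a tree $T$ with vertex set $Z\cup S\cup\{z_{BS}\}$ whose edges are directed towards $z_{BS}$. Every node other than the sink has exactly one out-edge, and the sink has none. Each edge $e$ carries a positive flow $f(e)$ such that: - at each source, the flow on its out-edge minus the total flow on its in-edges equals $1$; - at each Steiner point, the out-flow equals the total in-flow; - the sink receives total flow $n$. The cost is $L(T)=\sum_{e\in E(T)} f(e)|e|^2$. In-neighbours of a node are the tails of its in-edges; its out-neighbour is the head of its out-edge. MFQSTs under the two strategies: - Explicit bound $k$: an MFQST minimises $L$ among FQSTs with $|S|\le k$. - Node-weighted with cost $c>0$: an MFQST minimises $L_c(T)=L(T)+c|S|$ over all FQSTs. No degree restrictions are imposed in either case. *)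

theory Defs
  imports "HOL-Analysis.Analysis"
begin

type_synonym pt = "real ^ 2"

definition vangle :: "pt \<Rightarrow> pt \<Rightarrow> real" where
  "vangle u v = (if u = 0 \<or> v = 0 then pi / 2 else arccos ((u \<bullet> v) / (norm u * norm v)))"

definition angle :: "pt \<Rightarrow> pt \<Rightarrow> pt \<Rightarrow> real" where
  "angle a b c = vangle (a - b) (c - b)"

definition fq_nodes :: "pt set \<Rightarrow> pt \<Rightarrow> pt set \<Rightarrow> pt set" where
  "fq_nodes Z zBS S = Z \<union> S \<union> {zBS}"

text \<open>The directed tree is encoded by the out-neighbour
  function par (each non-sink node v has the unique out-edge (v, par v)), and
  the flow on that out-edge is f v.  The tree condition: every node reaches the
  sink by following out-edges (this forces connectedness and acyclicity).\<close>
definition FQST :: "pt set \<Rightarrow> pt \<Rightarrow> pt set \<Rightarrow> (pt \<Rightarrow> pt) \<Rightarrow> (pt \<Rightarrow> real) \<Rightarrow> bool" where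
  "FQST Z zBS S par f \<longleftrightarrow>
     (let V = fq_nodes Z zBS S in
       finite S \<and> S \<inter> (Z \<union> {zBS}) = {} \<and>
       (\<forall>v \<in> V - {zBS}. par v \<in> V \<and> par v \<noteq> v) \<and>
       (\<forall>v \<in> V. \<exists>k. (par ^^ k) v = zBS) \<and>
       (\<forall>v \<in> V - {zBS}. f v > 0) \<and>
       (\<forall>z \<in> Z. f z - (\<Sum>w \<in> {w \<in> V - {zBS}. par w = z}. f w) = 1) \<and>
       (\<forall>s \<in> S. f s = (\<Sum>w \<in> {w \<in> V - {zBS}. par w = s}. f w)) \<and>
       (\<Sum>w \<in> {w \<in> V - {zBS}. par w = zBS}. f w) = real (card Z))"

definition fq_cost :: "pt set \<Rightarrow> pt \<Rightarrow> pt set \<Rightarrow> (pt \<Rightarrow> pt) \<Rightarrow> (pt \<Rightarrow> real) \<Rightarrow> real" where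
  "fq_cost Z zBS S par f = (\<Sum>v \<in> fq_nodes Z zBS S - {zBS}. f v * (norm (v - par v))\<^sup>2)"

definition MFQST_bound :: "nat \<Rightarrow> pt set \<Rightarrow> pt \<Rightarrow> pt set \<Rightarrow> (pt \<Rightarrow> pt) \<Rightarrow> (pt \<Rightarrow> real) \<Rightarrow> bool" where
  "MFQST_bound k Z zBS S par f \<longleftrightarrow>
     FQST Z zBS S par f \<and> card S \<le> k \<and>
     (\<forall>S' par' f'. FQST Z zBS S' par' f' \<and> card S' \<le> k \<longrightarrow>
        fq_cost Z zBS S par f \<le> fq_cost Z zBS S' par' f')"

definition MFQST_nw :: "real \<Rightarrow> pt set \<Rightarrow> pt \<Rightarrow> pt set \<Rightarrow> (pt \<Rightarrow> pt) \<Rightarrow> (pt \<Rightarrow> real) \<Rightarrow> bool" where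
  "MFQST_nw c Z zBS S par f \<longleftrightarrow>
     FQST Z zBS S par f \<and>
     (\<forall>S' par' f'. FQST Z zBS S' par' f' \<longrightarrow>
        fq_cost Z zBS S par f + c * real (card S) \<le> fq_cost Z zBS S' par' f' + c * real (card S'))"

end

theory Submission
  imports Defs
begin

lemma sum_two_change:
  fixes g h :: "'a \<Rightarrow> real"
  assumes "finite A" "u \<in> A" "x \<in> A" "u \<noteq> x" "\<forall>w\<in>A-{u,x}. g w = h w"
  shows "sum g A = sum h A + (g u - h u) + (g x - h x)"
proof -
  have 1: "sum g A = g u + (g x + sum g (A-{u}-{x}))"
    using assms(1-4) by (simp add: sum.remove)
  have 2: "sum h A = h u + (h x + sum h (A-{u}-{x}))"
    using assms(1-4) by (simp add: sum.remove)
  have 3: "sum g (A-{u}-{x}) = sum h (A-{u}-{x})"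
    using assms(5) by (intro sum.cong) auto
  show ?thesis using 1 2 3 by linarith
qed

lemma reach_mod:
  fixes par :: "'a \<Rightarrow> 'a"
  assumes cl: "\<forall>v\<in>V-{z}. par v \<in> V" and r: "\<forall>v\<in>V. \<exists>k. (par^^k) v = z"
    and u: "u\<in>V" "u\<noteq>z" "par u \<noteq> z"
  shows "\<forall>v\<in>V. \<exists>k. ((par(u := par (par u)))^^k) v = z"
proof -
  define p where "p = par(u := par (par u))"
  have main: "v\<in>V \<Longrightarrow> (par^^n) v = z \<Longrightarrow> \<exists>k. (p^^k) v = z" for n v
  proof (induction n arbitrary: v rule: less_induct)
    case (less n)
    show ?case
    proof (cases "v = z")
      case True then show ?thesis by (metis funpow_0)
    next
      case False
      then obtain m where n: "n = Suc m" using less.prems by (cases n) auto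
      have pv: "par v \<in> V" using cl less.prems False by auto
      have m: "(par^^m) (par v) = z" using less.prems n
        by (simp add: funpow_Suc_right del: funpow.simps)
      show ?thesis
      proof (cases "v = u")
        case False
        from less.IH[of m "par v"] n pv m obtain k where "(p^^k)(par v) = z" by auto
        then have "(p^^Suc k) v = z" using False
          by (simp add: p_def funpow_Suc_right del: funpow.simps)
        then show ?thesis by blast
      next
        case True
        have "m \<noteq> 0" using m True u(3) by (cases m) auto
        then obtain j where mj: "m = Suc j" by (cases m) auto
        have ppv: "par (par v) \<in> V" using cl pv True u by auto
        have j: "(par^^j) (par (par v)) = z" using m mj
          by (simp add: funpow_Suc_right del: funpow.simps)
        from less.IH[of j "par (par v)"] n mj ppv j obtain k where "(p^^k)(par (par v)) = z" by auto
        then have "(p^^Suc k) v = z" using True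
          by (simp add: p_def funpow_Suc_right del: funpow.simps)
        then show ?thesis by blast
      qed
    qed
  qed
  show ?thesis using r main unfolding p_def by blast
qed

lemma no_two_cycle:
  assumes "par u = x" "par x = u" "u \<noteq> z" "x \<noteq> z" "(par^^k) u = z"
  shows False
proof -
  have "(par^^n) u \<in> {u,x}" for n
    by (induction n) (use assms in auto)
  then show False using assms by (metis insertE singletonD)
qed

lemma norm_id:
  fixes u x y :: pt
  shows "(norm (u-y))\<^sup>2 = (norm (u-x))\<^sup>2 + (norm (x-y))\<^sup>2 - 2*((u-x) \<bullet> (y-x))"
  by (simp add: power2_norm_eq_inner inner_diff_left inner_diff_right inner_commute algebra_simps)

lemma improve:
  assumes F: "FQST Z zBS S par f" and finZ: "finite Z"
    and x: "x \<in> fq_nodes Z zBS S" "x \<noteq> zBS"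
    and u: "u \<in> fq_nodes Z zBS S - {zBS}" "par u = x"
    and D: "(u - x) \<bullet> (par x - x) > 0"
  shows "\<exists>S' par' f'. FQST Z zBS S' par' f' \<and> card S' \<le> card S \<and>
           fq_cost Z zBS S' par' f' < fq_cost Z zBS S par f"
proof -
  define V where "V = fq_nodes Z zBS S"
  define y where "y = par x"
  have fin: "finite S" using F unfolding FQST_def Let_def by auto
  have disj: "S \<inter> (Z \<union> {zBS}) = {}" using F unfolding FQST_def Let_def by auto
  have cl: "\<forall>v\<in>V-{zBS}. par v \<in> V \<and> par v \<noteq> v"
    using F unfolding FQST_def Let_def V_def by auto
  have reach: "\<forall>v\<in>V. \<exists>k. (par^^k) v = zBS"
    using F unfolding FQST_def Let_def V_def by auto
  have pos: "\<forall>v\<in>V-{zBS}. f v > 0"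
    using F unfolding FQST_def Let_def V_def by auto
  have src: "\<forall>z\<in>Z. f z - (\<Sum>w\<in>{w\<in>V-{zBS}. par w = z}. f w) = 1"
    using F unfolding FQST_def Let_def V_def by auto
  have st: "\<forall>s\<in>S. f s = (\<Sum>w\<in>{w\<in>V-{zBS}. par w = s}. f w)"
    using F unfolding FQST_def Let_def V_def by auto
  have sink: "(\<Sum>w\<in>{w\<in>V-{zBS}. par w = zBS}. f w) = real (card Z)"
    using F unfolding FQST_def Let_def V_def by auto
  have finV: "finite V" using fin finZ unfolding V_def fq_nodes_def by auto
  have uV: "u \<in> V" "u \<noteq> zBS" using u unfolding V_def by auto
  have xV: "x \<in> V" using x unfolding V_def by auto
  have ux: "u \<noteq> x" using cl uV u(2) by (metis DiffI singletonD)
  have yV: "y \<in> V" "y \<noteq> x" using cl xV x(2) unfolding y_def by auto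
  have uy: "u \<noteq> y"
  proof
    assume "u = y"
    obtain k where k: "(par^^k) u = zBS" using reach uV by auto
    have px: "par x = u" using \<open>u = y\<close> unfolding y_def by simp
    show False by (rule no_two_cycle[OF u(2) px uV(2) x(2) k])
  qed
  have D': "(u - x) \<bullet> (y - x) > 0" using D unfolding y_def .
  have nid: "(norm (u-y))\<^sup>2 = (norm (u-x))\<^sup>2 + (norm (x-y))\<^sup>2 - 2*((u-x) \<bullet> (y-x))"
    by (rule norm_id)
  have nde: "(norm (u-y))\<^sup>2 - (norm (u-x))\<^sup>2 - (norm (x-y))\<^sup>2 = -2*((u-x) \<bullet> (y-x))"
    using nid by linarith
  define par' where "par' = par(u := y)"
  have r0: "\<forall>v\<in>V. \<exists>k. ((par(u := par (par u)))^^k) v = zBS"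
    by (rule reach_mod) (use cl reach uV u(2) x(2) in auto)
  have reach': "\<forall>v\<in>V. \<exists>k. (par'^^k) v = zBS"
    using r0 u(2) unfolding par'_def y_def by simp
  have fu: "f u > 0" using pos uV by auto
  define I where "I = {w\<in>V-{zBS}. par w = x}"
  have finI: "finite I" using finV unfolding I_def by auto
  have uI: "u \<in> I" using uV u(2) unfolding I_def by auto
  have Isplit: "sum f I = f u + sum f (I - {u})" using finI uI by (simp add: sum.remove)
  have Inn: "sum f (I - {u}) \<ge> 0" using pos unfolding I_def by (intro sum_nonneg less_imp_le) auto
  have cases: "f x > f u \<or> (x \<in> S \<and> x \<notin> Z \<and> (\<forall>w\<in>V-{zBS}. par w = x \<longrightarrow> w = u) \<and> f x = f u)"
  proof (cases "x \<in> Z")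
    case True
    then have "f x = 1 + sum f I" using src unfolding I_def by force
    then show ?thesis using Isplit Inn by linarith
  next
    case False
    then have xS: "x \<in> S" using xV x(2) unfolding V_def fq_nodes_def by auto
    then have fx: "f x = sum f I" using st unfolding I_def by force
    show ?thesis
    proof (cases "\<exists>w\<in>I. w \<noteq> u")
      case True
      then obtain w where w: "w \<in> I" "w \<noteq> u" by auto
      have "f w \<le> sum f (I - {u})"
        using w finI pos unfolding I_def by (intro member_le_sum) (auto intro: less_imp_le)
      moreover have "f w > 0" using w pos unfolding I_def by auto
      ultimately show ?thesis using fx Isplit by linarith
    next
      case False
      then have "I - {u} = {}" by auto
      then have "sum f (I - {u}) = 0" by (simp only: sum.empty)
      then have "f x = f u" using fx Isplit by linarith
      then show ?thesis using xS \<open>x \<notin> Z\<close> False unfolding I_def by auto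
    qed
  qed
  have cost_old: "fq_cost Z zBS S par f = (\<Sum>v\<in>V-{zBS}. f v * (norm (v - par v))\<^sup>2)"
    unfolding fq_cost_def V_def ..
  have finA: "finite (V - {zBS})" using finV by auto
  have uA: "u \<in> V - {zBS}" and xA: "x \<in> V - {zBS}" using uV xV x(2) by auto
  from cases show ?thesis
  proof
    assume fxu: "f x > f u"
    define f' where "f' = f(x := f x - f u)"
    have key: "(\<Sum>w\<in>{w\<in>V-{zBS}. par' w = z}. f' w) =
               (\<Sum>w\<in>{w\<in>V-{zBS}. par w = z}. f w) - (if z = x then f u else 0)" for z
    proof -
      have "(\<Sum>w\<in>{w\<in>V-{zBS}. par' w = z}. f' w) = (\<Sum>w\<in>V-{zBS}. if par' w = z then f' w else 0)"
        using finA by (rule sum.inter_filter)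
      also have "\<dots> = (\<Sum>w\<in>V-{zBS}. if par w = z then f w else 0)
          + ((if par' u = z then f' u else 0) - (if par u = z then f u else 0))
          + ((if par' x = z then f' x else 0) - (if par x = z then f x else 0))"
        using finA uA xA ux by (intro sum_two_change) (auto simp: par'_def f'_def)
      also have "\<dots> = (\<Sum>w\<in>V-{zBS}. if par w = z then f w else 0) - (if z = x then f u else 0)"
        using ux u(2) by (auto simp: par'_def f'_def y_def)
      also have "(\<Sum>w\<in>V-{zBS}. if par w = z then f w else 0) = (\<Sum>w\<in>{w\<in>V-{zBS}. par w = z}. f w)"
        using finA by (rule sum.inter_filter[symmetric])
      finally show ?thesis .
    qed
    have FQ: "FQST Z zBS S par' f'"
      unfolding FQST_def Let_def V_def[symmetric]
    proof (intro conjI)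
      show "finite S" by (fact fin)
      show "S \<inter> (Z \<union> {zBS}) = {}" by (fact disj)
      show "\<forall>v\<in>V - {zBS}. par' v \<in> V \<and> par' v \<noteq> v"
        using cl yV uy unfolding par'_def by auto
      show "\<forall>v\<in>V. \<exists>k. (par' ^^ k) v = zBS" by (fact reach')
      show "\<forall>v\<in>V - {zBS}. 0 < f' v" using pos fxu unfolding f'_def by auto
      show "\<forall>z\<in>Z. f' z - (\<Sum>w\<in>{w \<in> V - {zBS}. par' w = z}. f' w) = 1"
        using src unfolding key by (auto simp: f'_def)
      show "\<forall>s\<in>S. f' s = (\<Sum>w\<in>{w \<in> V - {zBS}. par' w = s}. f' w)"
        using st unfolding key by (auto simp: f'_def)
      show "(\<Sum>w\<in>{w \<in> V - {zBS}. par' w = zBS}. f' w) = real (card Z)"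
        using sink x(2) unfolding key by auto
    qed
    have "fq_cost Z zBS S par' f' = (\<Sum>v\<in>V-{zBS}. f' v * (norm (v - par' v))\<^sup>2)"
      unfolding fq_cost_def V_def ..
    also have "\<dots> = (\<Sum>v\<in>V-{zBS}. f v * (norm (v - par v))\<^sup>2)
        + (f' u * (norm (u - par' u))\<^sup>2 - f u * (norm (u - par u))\<^sup>2)
        + (f' x * (norm (x - par' x))\<^sup>2 - f x * (norm (x - par x))\<^sup>2)"
      using finA uA xA ux by (intro sum_two_change) (auto simp: par'_def f'_def)
    also have "\<dots> = (\<Sum>v\<in>V-{zBS}. f v * (norm (v - par v))\<^sup>2)
        + f u * ((norm (u-y))\<^sup>2 - (norm (u-x))\<^sup>2 - (norm (x-y))\<^sup>2)"
      using ux u(2) by (simp add: par'_def f'_def y_def algebra_simps)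
    also have "\<dots> = (\<Sum>v\<in>V-{zBS}. f v * (norm (v - par v))\<^sup>2) - 2 * f u * ((u-x) \<bullet> (y-x))"
      unfolding nde by (simp add: algebra_simps)
    finally have "fq_cost Z zBS S par' f' < fq_cost Z zBS S par f"
      using cost_old fu D' by (simp add: mult_pos_pos)
    then show ?thesis using FQ by blast
  next
    assume B: "x \<in> S \<and> x \<notin> Z \<and> (\<forall>w\<in>V-{zBS}. par w = x \<longrightarrow> w = u) \<and> f x = f u"
    then have xS: "x \<in> S" and xZ: "x \<notin> Z" and onlyu: "\<forall>w\<in>V-{zBS}. par w = x \<longrightarrow> w = u"
      and fxu: "f x = f u" by auto
    have V': "fq_nodes Z zBS (S - {x}) = V - {x}"
      using xZ x(2) unfolding V_def fq_nodes_def by auto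
    have setr: "{w\<in>V-{x}-{zBS}. P w} = {w\<in>V-{zBS}. w \<noteq> x \<and> P w}" for P by auto
    have key: "z \<noteq> x \<Longrightarrow> (\<Sum>w\<in>{w\<in>V-{x}-{zBS}. par' w = z}. f w) =
               (\<Sum>w\<in>{w\<in>V-{zBS}. par w = z}. f w)" for z
    proof -
      assume zx: "z \<noteq> x"
      have "(\<Sum>w\<in>{w\<in>V-{x}-{zBS}. par' w = z}. f w) = (\<Sum>w\<in>V-{zBS}. if w \<noteq> x \<and> par' w = z then f w else 0)"
        unfolding setr using finA by (rule sum.inter_filter)
      also have "\<dots> = (\<Sum>w\<in>V-{zBS}. if par w = z then f w else 0)
          + ((if u \<noteq> x \<and> par' u = z then f u else 0) - (if par u = z then f u else 0))
          + ((if x \<noteq> x \<and> par' x = z then f x else 0) - (if par x = z then f x else 0))"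
        using finA uA xA ux by (intro sum_two_change) (auto simp: par'_def)
      also have "\<dots> = (\<Sum>w\<in>V-{zBS}. if par w = z then f w else 0)"
        using ux u(2) zx fxu by (auto simp: par'_def y_def)
      also have "(\<Sum>w\<in>V-{zBS}. if par w = z then f w else 0) = (\<Sum>w\<in>{w\<in>V-{zBS}. par w = z}. f w)"
        using finA by (rule sum.inter_filter[symmetric])
      finally show ?thesis .
    qed
    have FQ: "FQST Z zBS (S - {x}) par' f"
      unfolding FQST_def Let_def V'
    proof (intro conjI)
      show "finite (S - {x})" using fin by auto
      show "(S - {x}) \<inter> (Z \<union> {zBS}) = {}" using disj by auto
      show "\<forall>v\<in>V - {x} - {zBS}. par' v \<in> V - {x} \<and> par' v \<noteq> v"
        using cl yV uy onlyu unfolding par'_def by auto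
      show "\<forall>v\<in>V - {x}. \<exists>k. (par' ^^ k) v = zBS" using reach' by auto
      show "\<forall>v\<in>V - {x} - {zBS}. 0 < f v" using pos by auto
      show "\<forall>z\<in>Z. f z - (\<Sum>w\<in>{w \<in> V - {x} - {zBS}. par' w = z}. f w) = 1"
      proof
        fix z assume z: "z \<in> Z"
        then have "z \<noteq> x" using xZ by auto
        then show "f z - (\<Sum>w\<in>{w \<in> V - {x} - {zBS}. par' w = z}. f w) = 1"
          using key[of z] src z by simp
      qed
      show "\<forall>s\<in>S - {x}. f s = (\<Sum>w\<in>{w \<in> V - {x} - {zBS}. par' w = s}. f w)"
      proof
        fix z assume z: "z \<in> S - {x}"
        then have "z \<noteq> x" by auto
        then show "f z = (\<Sum>w\<in>{w \<in> V - {x} - {zBS}. par' w = z}. f w)"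
          using key[of z] st z by simp
      qed
      show "(\<Sum>w\<in>{w \<in> V - {x} - {zBS}. par' w = zBS}. f w) = real (card Z)"
        using sink key[of zBS] x(2) by simp
    qed
    have "fq_cost Z zBS (S - {x}) par' f = (\<Sum>v\<in>V-{x}-{zBS}. f v * (norm (v - par' v))\<^sup>2)"
      unfolding fq_cost_def V' ..
    also have "\<dots> = (\<Sum>v\<in>{w\<in>V-{zBS}. w \<noteq> x}. f v * (norm (v - par' v))\<^sup>2)"
      by (rule sum.cong) auto
    also have "\<dots> = (\<Sum>v\<in>V-{zBS}. if v \<noteq> x then f v * (norm (v - par' v))\<^sup>2 else 0)"
      using finA by (rule sum.inter_filter)
    also have "\<dots> = (\<Sum>v\<in>V-{zBS}. f v * (norm (v - par v))\<^sup>2)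
        + ((if u \<noteq> x then f u * (norm (u - par' u))\<^sup>2 else 0) - f u * (norm (u - par u))\<^sup>2)
        + ((if x \<noteq> x then f x * (norm (x - par' x))\<^sup>2 else 0) - f x * (norm (x - par x))\<^sup>2)"
      using finA uA xA ux by (intro sum_two_change) (auto simp: par'_def)
    also have "\<dots> = (\<Sum>v\<in>V-{zBS}. f v * (norm (v - par v))\<^sup>2)
        + f u * ((norm (u-y))\<^sup>2 - (norm (u-x))\<^sup>2 - (norm (x-y))\<^sup>2)"
      using ux u(2) fxu by (simp add: par'_def y_def algebra_simps)
    also have "\<dots> = (\<Sum>v\<in>V-{zBS}. f v * (norm (v - par v))\<^sup>2) - 2 * f u * ((u-x) \<bullet> (y-x))"
      unfolding nde by (simp add: algebra_simps)
    finally have "fq_cost Z zBS (S - {x}) par' f < fq_cost Z zBS S par f"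
      using cost_old fu D' by (simp add: mult_pos_pos)
    moreover have "card (S - {x}) \<le> card S" by (rule card_Diff1_le)
    ultimately show ?thesis using FQ by blast
  qed
qed


theorem mainTheorem11:
  fixes Z :: "pt set" and zBS :: pt and S :: "pt set"
    and par :: "pt \<Rightarrow> pt" and f :: "pt \<Rightarrow> real"
    and k :: nat and c :: real and x u y :: pt
  assumes "finite Z" and "Z \<noteq> {}" and "zBS \<notin> Z"
    and "MFQST_bound k Z zBS S par f \<or> (c > 0 \<and> MFQST_nw c Z zBS S par f)"
    and "x \<in> fq_nodes Z zBS S" and "x \<noteq> zBS" and "y = par x"
    and "u \<in> fq_nodes Z zBS S - {zBS}" and "par u = x"
    and "u \<noteq> x" and "x \<noteq> y"
  shows "angle u x y \<ge> pi / 2"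
proof -
  have F: "FQST Z zBS S par f" using assms(4) unfolding MFQST_bound_def MFQST_nw_def by auto
  have Dle: "(u - x) \<bullet> (y - x) \<le> 0"
  proof (rule ccontr)
    assume "\<not> (u - x) \<bullet> (y - x) \<le> 0"
    then have D: "(u - x) \<bullet> (par x - x) > 0" using assms(7) by simp
    obtain S' par' f' where FQ: "FQST Z zBS S' par' f'" and cS: "card S' \<le> card S"
      and lt: "fq_cost Z zBS S' par' f' < fq_cost Z zBS S par f"
      using improve[OF F assms(1) assms(5) assms(6) assms(8) assms(9) D] by blast
    from assms(4) show False
    proof
      assume M: "MFQST_bound k Z zBS S par f"
      then have "card S' \<le> k" using cS unfolding MFQST_bound_def by auto
      then show False using M FQ lt unfolding MFQST_bound_def by force
    next
      assume M: "c > 0 \<and> MFQST_nw c Z zBS S par f"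
      then have "c * real (card S') \<le> c * real (card S)" using cS by simp
      moreover have "fq_cost Z zBS S par f + c * real (card S) \<le> fq_cost Z zBS S' par' f' + c * real (card S')"
        using M FQ unfolding MFQST_nw_def by blast
      ultimately show False using lt by linarith
    qed
  qed
  define a where "a = u - x"
  define b where "b = y - x"
  have a0: "a \<noteq> 0" and b0: "b \<noteq> 0" using assms(10,11) unfolding a_def b_def by auto
  have na: "norm a > 0" and nb: "norm b > 0" using a0 b0 by auto
  have cs: "\<bar>a \<bullet> b\<bar> \<le> norm a * norm b" by (rule Cauchy_Schwarz_ineq2)
  have t1: "-1 \<le> (a \<bullet> b) / (norm a * norm b)"
    using cs na nb by (simp add: field_simps abs_le_iff)
  have t2: "(a \<bullet> b) / (norm a * norm b) \<le> 0"
    using Dle na nb unfolding a_def b_def by (simp add: divide_nonpos_pos)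
  have "arccos 0 \<le> arccos ((a \<bullet> b) / (norm a * norm b))"
    by (rule arccos_le_arccos) (use t1 t2 in auto)
  then show ?thesis
    unfolding angle_def vangle_def a_def[symmetric] b_def[symmetric] using a0 b0 by simp
qed

end
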